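(* The value of the problem (RE) — maximize $\phi_t+\phi_d(1-G(\tau))$ over all $(G,\phi,\tau)$ with $G$ a distribution on $[\underline{\theta},\overline{\theta}]$, $\phi=(\phi_t,\phi_d)\in\mathbb{R}^2$, $\tau\in\mathbb{R}$, subject to (w-P), (w-HE) and $E_G[s]=\mu$ — equals $(\overline{\theta}-\mu)\big(1-e^{(\underline{\theta}-\mu)/(\overline{\theta}-\mu)}\big)$, and it has a unique solution, given by $\phi_t^*=0$, $\phi_d^*=\overline{\theta}-\mu$, and $G^*(s)=e^{(\underline{\theta}-\mu)/(\overline{\theta}-\mu)}$ for $s\in[\underline{\theta},\underline{\theta}+\overline{\theta}-\mu)$, $G^*(s)=e^{(s-\overline{\theta})/(\overline{\theta}-\mu)}$ for $s\in[\underline{\theta}+\overline{\theta}-\mu,\overline{\theta}]$.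
   Context: $F$ is a distribution with lowest and highest support points $0\le\underline{\theta}<\overline{\theta}<\infty$ and mean $\mu$. For a CDF $G$ on $[\underline{\theta},\overline{\theta}]$ and fees $(\phi_t,\phi_d)$: (w-P) means $\phi_t\le\int_{\mu+\phi_d}^{\overline{\theta}}[s-(\mu+\phi_d)]dG(s)$; (w-HE) for a threshold $\tau$ means $\tau-\phi_d=E_G[s\mid s\le\tau]$ and $\tau'-\phi_d\ge E_G[s\mid s\le\tau']$ for all $\tau'>\tau$. *)

theory Defs
  imports "HOL-Probability.Probability"
begin

text \<open>A distribution on the reals (Borel probability measure) concentrated on [a,b].
  Its CDF is the library's cdf G s = measure G {..s}.\<close>
definition dist_on :: "real measure \<Rightarrow> real \<Rightarrow> real \<Rightarrow> bool" where
  "dist_on G a b \<longleftrightarrow> prob_space G \<and> sets G = sets borel \<and> measure G {a..b} = 1"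

definition support_bounds :: "real measure \<Rightarrow> real \<Rightarrow> real \<Rightarrow> bool" where
  "support_bounds F lo hi \<longleftrightarrow> dist_on F lo hi
     \<and> (\<forall>e>0. measure F {..<lo + e} > 0) \<and> (\<forall>e>0. measure F {hi - e<..} > 0)"

definition cond_mean_le :: "real measure \<Rightarrow> real \<Rightarrow> real" where
  "cond_mean_le G t = (LINT s:{..t}|G. s) / cdf G t"

definition wP :: "real \<Rightarrow> real \<Rightarrow> real measure \<Rightarrow> real \<Rightarrow> real \<Rightarrow> bool" where
  "wP hi \<mu> G \<phi>t \<phi>d \<longleftrightarrow> \<phi>t \<le> (LINT s:{\<mu> + \<phi>d..hi}|G. s - (\<mu> + \<phi>d))"

text \<open>(w-HE) for threshold tau; the conditional expectation must be defined, i.e. G(tau) > 0.\<close>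
definition wHE :: "real measure \<Rightarrow> real \<Rightarrow> real \<Rightarrow> bool" where
  "wHE G \<phi>d \<tau> \<longleftrightarrow> cdf G \<tau> > 0 \<and> \<tau> - \<phi>d = cond_mean_le G \<tau>
     \<and> (\<forall>\<tau>'>\<tau>. \<tau>' - \<phi>d \<ge> cond_mean_le G \<tau>')"

definition RE_feasible :: "real \<Rightarrow> real \<Rightarrow> real \<Rightarrow> real measure \<Rightarrow> real \<Rightarrow> real \<Rightarrow> real \<Rightarrow> bool" where
  "RE_feasible lo hi \<mu> G \<phi>t \<phi>d \<tau> \<longleftrightarrow>
     dist_on G lo hi \<and> wP hi \<mu> G \<phi>t \<phi>d \<and> wHE G \<phi>d \<tau> \<and> (LINT s|G. s) = \<mu>"

definition RE_obj :: "real measure \<Rightarrow> real \<Rightarrow> real \<Rightarrow> real \<Rightarrow> real" where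
  "RE_obj G \<phi>t \<phi>d \<tau> = \<phi>t + \<phi>d * (1 - cdf G \<tau>)"

definition G_star :: "real \<Rightarrow> real \<Rightarrow> real \<Rightarrow> real \<Rightarrow> real" where
  "G_star lo hi \<mu> s = (if s < lo + hi - \<mu> then exp ((lo - \<mu>) / (hi - \<mu>))
                       else exp ((s - hi) / (hi - \<mu>)))"

end

theory Submission
  imports Defs
begin


definition HH :: "real measure \<Rightarrow> real \<Rightarrow> real" where
  "HH G t = integral\<^sup>L G (\<lambda>s. max (t - s) 0)"

context
  fixes G :: "real measure" and lo hi :: real
  assumes D: "dist_on G lo hi"
begin

lemma rd: "real_distribution G"
  using D unfolding dist_on_def real_distribution_def real_distribution_axioms_def by auto

interpretation real_distribution G by (rule rd)

lemma AEin: "AE s in G. lo \<le> s \<and> s \<le> hi"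
proof -
  have "AE s in G. s \<in> {lo..hi}" using D unfolding dist_on_def by (intro AE_prob_1) auto
  then show ?thesis by auto
qed

lemma intg:
  fixes f :: "real \<Rightarrow> real" and B :: real
  assumes "f \<in> borel_measurable borel" "\<And>s. lo \<le> s \<Longrightarrow> s \<le> hi \<Longrightarrow> \<bar>f s\<bar> \<le> B"
  shows "integrable G f"
proof (rule integrable_const_bound[where B=B])
  show "AE x in G. norm (f x) \<le> B" using AEin by eventually_elim (simp add: assms(2))
  show "f \<in> borel_measurable G" using assms(1) measurable_cong_sets[OF events_eq_borel refl] by simp
qed

lemma intg_max: "integrable G (\<lambda>s. max (t - s) 0)"
  by (rule intg[where B="\<bar>t\<bar> + \<bar>lo\<bar> + \<bar>hi\<bar>"]) auto

lemma intg_id: "integrable G (\<lambda>s. s)"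
  by (rule intg[where B="\<bar>lo\<bar> + \<bar>hi\<bar>"]) auto

lemma intg_ind: "integrable G (\<lambda>s. indicator A s * s)" if "A \<in> sets borel"
  by (rule intg[where B="\<bar>lo\<bar> + \<bar>hi\<bar>"]) (use that in \<open>auto simp: indicator_def\<close>)

lemma intg_ind1: "integrable G (\<lambda>s. indicator A s :: real)" if "A \<in> sets borel"
  by (rule intg[where B="1"]) (use that in \<open>auto simp: indicator_def\<close>)

lemma cdf_int: "cdf G t = integral\<^sup>L G (indicator {..t})"
  by (simp add: cdf_def)

lemma HH_eq: "HH G t = t * cdf G t - (LINT s:{..t}|G. s)"
proof -
  have "HH G t = integral\<^sup>L G (\<lambda>s. t * indicator {..t} s - indicator {..t} s * s)"
    unfolding HH_def by (rule Bochner_Integration.integral_cong) (auto simp: indicator_def)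
  also have "\<dots> = t * integral\<^sup>L G (indicator {..t}) - integral\<^sup>L G (\<lambda>s. indicator {..t} s * s)"
    by (subst Bochner_Integration.integral_diff) (auto intro!: intg_ind intg_ind1)
  finally show ?thesis by (simp add: cdf_def set_lebesgue_integral_def)
qed

lemma cm_eq: "cdf G t > 0 \<Longrightarrow> cond_mean_le G t = t - HH G t / cdf G t"
  unfolding cond_mean_le_def HH_eq by (simp add: field_simps)

lemma HH_step: "t \<le> t' \<Longrightarrow> HH G t' - HH G t \<le> (t' - t) * cdf G t'"
proof -
  assume "t \<le> t'"
  have "HH G t' - HH G t = integral\<^sup>L G (\<lambda>s. max (t' - s) 0 - max (t - s) 0)"
    unfolding HH_def by (rule Bochner_Integration.integral_diff[symmetric]) (auto intro!: intg_max)
  also have "\<dots> \<le> integral\<^sup>L G (\<lambda>s. (t' - t) * indicator {..t'} s)"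
  proof (rule integral_mono)
    show "integrable G (\<lambda>s. (t' - t) * indicator {..t'} s)"
      by (intro integrable_mult_right intg_ind1) auto
  qed (use \<open>t \<le> t'\<close> in \<open>auto intro!: intg_max simp: indicator_def\<close>)
  finally show ?thesis by (simp add: cdf_def)
qed

lemma HH_mono: "t \<le> t' \<Longrightarrow> HH G t \<le> HH G t'"
  unfolding HH_def by (rule integral_mono) (auto intro!: intg_max)

lemma HH_nonneg: "0 \<le> HH G t"
  unfolding HH_def by (rule Bochner_Integration.integral_nonneg) auto

lemma HH_ge: "t - integral\<^sup>L G (\<lambda>s. s) \<le> HH G t"
proof -
  have "t - integral\<^sup>L G (\<lambda>s. s) = integral\<^sup>L G (\<lambda>s. t - s)"
    by (simp add: Bochner_Integration.integral_diff intg_id prob_space[simplified])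
  also have "\<dots> \<le> HH G t" unfolding HH_def
    by (rule integral_mono) (auto intro!: intg_max intg_id)
  finally show ?thesis .
qed

lemma HH_hi: "hi \<le> t \<Longrightarrow> HH G t = t - integral\<^sup>L G (\<lambda>s. s)"
proof -
  assume "hi \<le> t"
  have "HH G t = integral\<^sup>L G (\<lambda>s. t - s)"
    unfolding HH_def apply (rule integral_cong_AE) apply simp apply simp
    using AEin by eventually_elim (use \<open>hi \<le> t\<close> in auto)
  also have "\<dots> = t - integral\<^sup>L G (\<lambda>s. s)"
    by (simp add: Bochner_Integration.integral_diff intg_id prob_space[simplified])
  finally show ?thesis .
qed

lemma cdf_hi: "hi \<le> t \<Longrightarrow> cdf G t = 1"
proof -
  assume "hi \<le> t"
  have "cdf G t = integral\<^sup>L G (\<lambda>s. 1::real)"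
    unfolding cdf_int apply (rule integral_cong_AE) apply simp apply simp
    using AEin by eventually_elim (use \<open>hi \<le> t\<close> in auto)
  then show ?thesis using prob_space by simp
qed

lemma cdf_lt: "t < lo \<Longrightarrow> cdf G t = 0"
proof -
  assume "t < lo"
  have "cdf G t = integral\<^sup>L G (\<lambda>s. 0::real)"
    unfolding cdf_int apply (rule integral_cong_AE) apply simp apply simp
    using AEin by eventually_elim (use \<open>t < lo\<close> in auto)
  then show ?thesis by simp
qed

lemma cdf_pos: "0 < cdf G t \<Longrightarrow> lo \<le> t"
  by (rule ccontr) (simp add: cdf_lt)

lemma HH_lo: "HH G t \<le> (t - lo) * cdf G t"
proof -
  have "HH G t \<le> integral\<^sup>L G (\<lambda>s. (t - lo) * indicator {..t} s)"
    unfolding HH_def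
  proof (rule integral_mono_AE)
    show "integrable G (\<lambda>s. (t - lo) * indicator {..t} s)"
      by (intro integrable_mult_right intg_ind1) auto
    show "AE s in G. max (t - s) 0 \<le> (t - lo) * indicator {..t} s"
      using AEin by eventually_elim (auto simp: indicator_def)
  qed (rule intg_max)
  then show ?thesis by (simp add: cdf_def)
qed

lemma HH_wP: "(LINT s:{m..hi}|G. s - m) \<le> HH G m - m + integral\<^sup>L G (\<lambda>s. s)"
proof -
  have "(LINT s:{m..hi}|G. s - m) = integral\<^sup>L G (\<lambda>s. indicator {m..hi} s * (s - m))"
    by (simp add: set_lebesgue_integral_def)
  also have "\<dots> \<le> integral\<^sup>L G (\<lambda>s. max (m - s) 0 + (s - m))"
  proof (rule integral_mono)
    show "integrable G (\<lambda>s. indicator {m..hi} s * (s - m))"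
      by (rule intg[where B="\<bar>lo\<bar> + \<bar>hi\<bar> + \<bar>m\<bar>"]) (auto simp: indicator_def)
    show "integrable G (\<lambda>s. max (m - s) 0 + (s - m))"
      by (rule intg[where B="2*(\<bar>lo\<bar> + \<bar>hi\<bar> + \<bar>m\<bar>)"]) auto
  qed (auto simp: indicator_def)
  also have "\<dots> = HH G m + (integral\<^sup>L G (\<lambda>s. s) - m)"
    proof -
    have "integral\<^sup>L G (\<lambda>s. s - m) = integral\<^sup>L G (\<lambda>s. s) - integral\<^sup>L G (\<lambda>s. m)"
      by (rule Bochner_Integration.integral_diff) (auto intro!: intg_id)
    then show ?thesis
      by (subst Bochner_Integration.integral_add) (auto intro!: intg_max intg_id simp: prob_space[simplified] HH_def)
  qed
  finally show ?thesis by simp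
qed

lemma HH_split:
  assumes "lo < s" "s < t"
  shows "HH G t \<le> (t - lo) * cdf G t - (s - lo) * cdf G t + (s - lo) * cdf G s"
proof -
  have "HH G t \<le> integral\<^sup>L G (\<lambda>x. (t - lo) * indicator {..t} x - (s - lo) * indicator {..t} x + (s - lo) * indicator {..s} x)"
    unfolding HH_def
  proof (rule integral_mono_AE)
    show "integrable G (\<lambda>x. (t - lo) * indicator {..t} x - (s - lo) * indicator {..t} x + (s - lo) * indicator {..s} x)"
      by (intro Bochner_Integration.integrable_add Bochner_Integration.integrable_diff integrable_mult_right intg_ind1) auto
    show "AE x in G. max (t - x) 0 \<le> (t - lo) * indicator {..t} x - (s - lo) * indicator {..t} x + (s - lo) * indicator {..s} x"
      using AEin by eventually_elim (use assms in \<open>auto simp: indicator_def\<close>)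
  qed (rule intg_max)
  also have "\<dots> = (t - lo) * cdf G t - (s - lo) * cdf G t + (s - lo) * cdf G s"
  proof -
    have i: "\<And>a. integrable G (\<lambda>x. (indicator {..a} x :: real))" by (rule intg_ind1) auto
    have j: "\<And>a c. integrable G (\<lambda>x. c * (indicator {..a} x :: real))" by (intro integrable_mult_right i)
    have k: "integrable G (\<lambda>x. (t - lo) * indicator {..t} x - (s - lo) * indicator {..t} x)"
      by (intro Bochner_Integration.integrable_diff j)
    show ?thesis
      apply (subst Bochner_Integration.integral_add[OF k j])
      apply (subst Bochner_Integration.integral_diff[OF j j])
      by (simp add: cdf_def)
  qed
  finally show ?thesis .
qed

lemma HH_chord:
  assumes "lo \<le> c" "c \<le> hi" "lo < hi"
  shows "HH G c \<le> (c - lo) / (hi - lo) * (hi - integral\<^sup>L G (\<lambda>s. s))"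
proof -
  have "HH G c \<le> integral\<^sup>L G (\<lambda>x. (c - lo) / (hi - lo) * (hi - x))"
    unfolding HH_def
  proof (rule integral_mono_AE)
    show "integrable G (\<lambda>x. (c - lo) / (hi - lo) * (hi - x))"
      by (intro integrable_mult_right Bochner_Integration.integrable_diff intg_id) (auto simp: prob_space[simplified])
    show "AE x in G. max (c - x) 0 \<le> (c - lo) / (hi - lo) * (hi - x)"
      using AEin
    proof eventually_elim
      case (elim x)
      show ?case
      proof (cases "x \<le> c")
        case True
        have "(c - hi) * (x - lo) \<le> 0" using elim assms by (intro mult_nonpos_nonneg) auto
        then have "(c - x) * (hi - lo) \<le> (c - lo) * (hi - x)" by (simp add: algebra_simps)
        then show ?thesis using True assms by (simp add: field_simps)
      next
        case False
        then show ?thesis using elim assms by (auto intro!: mult_nonneg_nonneg divide_nonneg_nonneg)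
      qed
    qed
  qed (rule intg_max)
  also have "\<dots> = (c - lo) / (hi - lo) * (hi - integral\<^sup>L G (\<lambda>s. s))"
    by (simp add: Bochner_Integration.integral_diff intg_id prob_space[simplified])
  finally show ?thesis .
qed

lemma HH_step_lo: "t \<le> t' \<Longrightarrow> (t' - t) * cdf G t \<le> HH G t' - HH G t"
proof -
  assume "t \<le> t'"
  have "(t' - t) * cdf G t = integral\<^sup>L G (\<lambda>s. (t' - t) * indicator {..t} s)"
    by (simp add: cdf_def)
  also have "\<dots> \<le> integral\<^sup>L G (\<lambda>s. max (t' - s) 0 - max (t - s) 0)"
  proof (rule integral_mono)
    show "integrable G (\<lambda>s. (t' - t) * indicator {..t} s)"
      by (intro integrable_mult_right intg_ind1) auto
  qed (use \<open>t \<le> t'\<close> in \<open>auto intro!: intg_max simp: indicator_def\<close>)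
  also have "\<dots> = HH G t' - HH G t"
    unfolding HH_def by (rule Bochner_Integration.integral_diff) (auto intro!: intg_max)
  finally show ?thesis .
qed

lemma wHE_eq: "wHE G d \<tau> \<Longrightarrow> HH G \<tau> = d * cdf G \<tau>"
proof -
  assume W: "wHE G d \<tau>"
  then have c: "0 < cdf G \<tau>" and e: "\<tau> - d = cond_mean_le G \<tau>" unfolding wHE_def by auto
  have "\<tau> - d = \<tau> - HH G \<tau> / cdf G \<tau>" using e cm_eq[OF c] by simp
  then have "HH G \<tau> / cdf G \<tau> = d" by simp
  then show ?thesis using c by (simp add: field_simps)
qed

lemma wHE_rat: "wHE G d \<tau> \<Longrightarrow> \<tau> \<le> t \<Longrightarrow> d * cdf G t \<le> HH G t"
proof -
  assume W: "wHE G d \<tau>" and t: "\<tau> \<le> t"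
  have c: "0 < cdf G t" using W t cdf_nondecreasing[OF t] unfolding wHE_def by linarith
  show ?thesis
  proof (cases "t = \<tau>")
    case True then show ?thesis using wHE_eq[OF W] by simp
  next
    case False
    then have "t - d \<ge> cond_mean_le G t" using W t unfolding wHE_def by auto
    then have "HH G t / cdf G t \<ge> d" using cm_eq[OF c] by simp
    then show ?thesis using c by (simp add: field_simps)
  qed
qed

end

lemma gronwall_disc:
  fixes H C :: "real \<Rightarrow> real" and a b d :: real
  assumes d: "0 < d" and ab: "a \<le> b"
    and step: "\<And>t t'. a \<le> t \<Longrightarrow> t \<le> t' \<Longrightarrow> t' \<le> b \<Longrightarrow> H t' - H t \<le> (t' - t) * C t'"
    and rat: "\<And>t. a \<le> t \<Longrightarrow> t \<le> b \<Longrightarrow> d * C t \<le> H t"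
  shows "H b * exp (-((b - a) / d)) \<le> H a"
proof -
  define c where "c = (b - a) / d"
  have c0: "0 \<le> c" using d ab by (simp add: c_def)
  have key: "H b * (1 + (-c) / real n) ^ n \<le> H a" if n: "c < real n" for n :: nat
  proof -
    have npos: "0 < real n" using n c0 by linarith
    define h where "h = (b - a) / real n"
    define q where "q = 1 - h / d"
    have h0: "0 \<le> h" using ab npos by (simp add: h_def)
    have hd: "h / d = c / real n" by (simp add: h_def c_def field_simps)
    have q0: "0 < q" using n npos by (simp add: q_def hd field_simps)
    have ind: "j \<le> n \<Longrightarrow> H (a + real j * h) * q ^ j \<le> H a" for j
    proof (induction j)
      case 0 then show ?case by simp
    next
      case (Suc j)
      define t where "t = a + real j * h"
      define t' where "t' = a + real (Suc j) * h"
      have tt: "t' = t + h" by (simp add: t_def t'_def algebra_simps)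
      have "real (Suc j) * h \<le> real n * h" using Suc.prems h0 by (intro mult_right_mono) auto
      then have t'b: "t' \<le> b" using npos by (simp add: t'_def h_def)
      have at: "a \<le> t" using h0 by (simp add: t_def)
      have "H t' - H t \<le> h * C t'" using step[of t t'] at t'b h0 by (simp add: tt)
      also have "h * C t' \<le> h * (H t' / d)"
        using rat[of t'] at t'b h0 d tt by (intro mult_left_mono) (auto simp: field_simps)
      finally have "H t' * q \<le> H t" by (simp add: q_def field_simps)
      then have "H t' * q * q ^ j \<le> H t * q ^ j" using q0 by (intro mult_right_mono) auto
      also have "\<dots> \<le> H a" using Suc by (simp add: t_def)
      finally show ?case by (simp add: t'_def mult.assoc)
    qed
    have "a + real n * h = b" using npos by (simp add: h_def)
    moreover have "q = 1 + (-c) / real n" using hd by (simp add: q_def)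
    ultimately show ?thesis using ind[of n] by simp
  qed
  have lim: "(\<lambda>n. H b * (1 + (-c) / real n) ^ n) \<longlonglongrightarrow> H b * exp (-c)"
    by (intro tendsto_mult tendsto_const tendsto_exp_limit_sequentially)
  obtain N :: nat where N: "c < real N" using reals_Archimedean2 by blast
  have "H b * exp (-c) \<le> H a"
  proof (rule LIMSEQ_le_const2[OF lim], intro exI[of _ N] allI impI)
    fix n assume "N \<le> n"
    then have "c < real n" using N by (meson le_less_trans of_nat_le_iff less_le_trans order.refl)
    then show "H b * (1 + (-c) / real n) ^ n \<le> H a" by (rule key)
  qed
  then show ?thesis by (simp add: c_def)
qed



lemma exp_strict: "x \<noteq> 0 \<Longrightarrow> 1 + x < exp (x::real)"
proof -
  assume x: "x \<noteq> 0"
  show ?thesis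
  proof (cases "1 + x / 2 \<ge> 0")
    case True
    have "(1 + x/2)^2 \<le> exp (x/2) ^ 2"
      using True by (intro power_mono) (auto simp: exp_ge_add_one_self)
    also have "exp (x/2) ^ 2 = exp x" by (simp add: power2_eq_square flip: exp_add)
    finally have "1 + x + x^2/4 \<le> exp x" by (simp add: power2_eq_square algebra_simps)
    moreover have "x^2 > 0" using x by simp
    ultimately show ?thesis by linarith
  next
    case False
    then have "1 + x < 0" by linarith
    then show ?thesis using exp_gt_zero[of x] by linarith
  qed
qed

lemma sinh_strict:
  fixes y :: real assumes "0 < y" shows "2 * y < exp y - exp (-y)"
proof -
  have "(\<lambda>t. exp t - exp (-t) - 2 * t) 0 < (\<lambda>t. exp t - exp (-t) - 2 * t) y"
  proof (rule DERIV_pos_imp_increasing_open[OF assms])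
    fix x :: real assume x: "0 < x" "x < y"
    have "((\<lambda>t. exp t - exp (-t) - 2 * t) has_real_derivative (exp x + exp (-x) - 2)) (at x)"
      by (auto intro!: derivative_eq_intros)
    moreover have "exp x + exp (-x) - 2 > 0"
    proof -
      have "exp x + exp (-x) - 2 = (exp (x/2) - exp (-x/2))^2"
        by (simp add: power2_eq_square algebra_simps flip: exp_add)
      moreover have "exp (x/2) \<noteq> exp (-x/2)" using x by simp
      ultimately show ?thesis by simp
    qed
    ultimately show "\<exists>d. ((\<lambda>t. exp t - exp (-t) - 2 * t) has_real_derivative d) (at x) \<and> d > 0" by blast
  qed (intro continuous_intros)
  then show ?thesis by simp
qed

lemma gfun_decr:
  fixes a b :: real assumes "0 < a" "a < b"
  shows "1/b - 1/(exp b - 1) < 1/a - 1/(exp a - 1)"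
proof -
  have "(\<lambda>x. 1/x - 1/(exp x - 1)) b < (\<lambda>x. 1/x - 1/(exp x - 1)) a"
  proof (rule DERIV_neg_imp_decreasing_open[OF assms(2)])
    fix x :: real assume x: "a < x" "x < b"
    then have x0: "0 < x" using assms by simp
    have e1: "exp x - 1 > 0" using x0 by (simp add: exp_gt_one)
    have "((\<lambda>x. 1/x - 1/(exp x - 1)) has_real_derivative (- 1/x^2 + exp x / (exp x - 1)^2)) (at x)"
      using x0 e1 by (auto intro!: derivative_eq_intros simp: power2_eq_square field_simps)
    moreover have "- 1/x^2 + exp x / (exp x - 1)^2 < 0"
    proof -
      have s: "2 * (x/2) < exp (x/2) - exp (-(x/2))" using x0 by (intro sinh_strict) simp
      have "x * exp (x/2) < (exp (x/2) - exp (-(x/2))) * exp (x/2)"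
        using s by (intro mult_strict_right_mono) auto
      also have "\<dots> = exp x - 1" by (simp add: algebra_simps flip: exp_add)
      finally have l: "x * exp (x/2) < exp x - 1" .
      have "(x * exp (x/2))^2 < (exp x - 1)^2"
        using l x0 by (intro power_strict_mono) auto
      also have "(x * exp (x/2))^2 = x^2 * exp x" by (simp add: power2_eq_square algebra_simps flip: exp_add)
      finally have "x^2 * exp x < (exp x - 1)^2" .
      then show ?thesis using x0 e1 by (simp add: field_simps)
    qed
    ultimately show "\<exists>y. ((\<lambda>x. 1/x - 1/(exp x - 1)) has_real_derivative y) (at x) \<and> y < 0" by blast
  next
    have "\<forall>x\<in>{a..b}. exp x - 1 \<noteq> 0 \<and> x \<noteq> 0" using assms by auto
    then show "continuous_on {a..b} (\<lambda>x. 1/x - 1/(exp x - 1))"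
      by (intro continuous_intros) auto
  qed
  then show ?thesis by simp
qed

lemma key_ineq:
  fixes L d D :: real
  assumes "0 < L" "0 < d" "d < D"
  shows "(1 - exp (-(L/d))) * L < (1 - exp (-(L/D))) * (L + (1 - exp (-(L/d))) * (D - d))"
proof -
  define a where "a = L / D"
  define b where "b = L / d"
  have a0: "0 < a" using assms by (simp add: a_def)
  have ab: "a < b" using assms by (simp add: a_def b_def frac_less2)
  define A where "A = exp (-a)"
  define B where "B = exp (-b)"
  have A1: "A < 1" "0 < A" using a0 by (auto simp: A_def)
  have B1: "B < 1" "0 < B" using a0 ab by (auto simp: B_def)
  have fa: "1/(exp a - 1) = A/(1-A)" using A1 by (simp add: A_def exp_minus field_simps)
  have fb: "1/(exp b - 1) = B/(1-B)" using B1 by (simp add: B_def exp_minus field_simps)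
  have g: "1/b - B/(1-B) < 1/a - A/(1-A)" using gfun_decr[OF a0 ab] fa fb by simp
  have "A/(1-A) - B/(1-B) = (A - B)/((1-A)*(1-B))" using A1 B1 by (simp add: field_simps)
  then have "(A - B)/((1-A)*(1-B)) < 1/a - 1/b" using g by linarith
  moreover have P: "(1-A)*(1-B) > 0" using A1 B1 by simp
  ultimately have "(A - B) < (1/a - 1/b) * ((1-A)*(1-B))" by (simp add: pos_divide_less_eq)
  then have "(A - B) < (1-A)*(1-B)*(1/a - 1/b)" by (simp add: mult.commute)
  then have "(A - B) * L < (1-A)*(1-B)*(1/a - 1/b) * L" using assms by (intro mult_strict_right_mono) auto
  moreover have "(1/a - 1/b) * L = D - d" using assms by (simp add: a_def b_def field_simps)
  ultimately have "(A - B) * L < (1-A)*(1-B)*(D - d)"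
    by (metis mult.assoc)
  then have "(1-B)*L < (1-A)*(L + (1-B)*(D-d))" by (simp add: algebra_simps)
  then show ?thesis by (simp add: A_def B_def a_def b_def)
qed

lemma d0_ineq:
  fixes a :: real assumes "0 < a" shows "a / (1 + a) < 1 - exp (-a)"
proof -
  have "1 + a < exp a" using assms by (intro exp_strict) simp
  then have "exp (-a) < 1 / (1 + a)" using assms by (simp add: exp_minus field_simps)
  moreover have "a / (1 + a) = 1 - 1/(1+a)" using assms by (simp add: field_simps)
  ultimately show ?thesis by linarith
qed



lemma RE_bound:
  fixes G :: "real measure"
  assumes D: "dist_on G lo hi" and mu: "integral\<^sup>L G (\<lambda>s. s) = \<mu>" and lm: "lo < \<mu>" "\<mu> < hi"
    and P: "wP hi \<mu> G \<phi>t d" and HE: "wHE G d \<tau>"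
  shows "\<phi>t + d * (1 - cdf G \<tau>) \<le> (hi - \<mu>) * (1 - exp ((lo - \<mu>) / (hi - \<mu>)))
     \<and> (\<phi>t + d * (1 - cdf G \<tau>) = (hi - \<mu>) * (1 - exp ((lo - \<mu>) / (hi - \<mu>))) \<longrightarrow>
         \<phi>t = 0 \<and> d = hi - \<mu> \<and> \<tau> = lo + (hi - \<mu>) \<and> cdf G \<tau> = exp ((lo - \<mu>) / (hi - \<mu>)))"
proof -
  interpret real_distribution G by (rule rd[OF D])
  define DD where "DD = hi - \<mu>"
  define k where "k = \<mu> - lo"
  define T where "T = DD * (1 - exp (-(k/DD)))"
  define obj where "obj = \<phi>t + d * (1 - cdf G \<tau>)"
  have DD0: "0 < DD" and k0: "0 < k" using lm by (auto simp: DD_def k_def)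
  have ex: "(lo - \<mu>) / (hi - \<mu>) = -(k/DD)" unfolding DD_def k_def by (simp add: minus_divide_left)
  have T0: "0 < T" using DD0 k0 by (simp add: T_def)
  have c0: "0 < cdf G \<tau>" using HE unfolding wHE_def by auto
  have lot: "lo \<le> \<tau>" using cdf_pos[OF D c0] .
  have Ht: "HH G \<tau> = d * cdf G \<tau>" using wHE_eq[OF D HE] .
  have rat: "\<And>t. \<tau> \<le> t \<Longrightarrow> d * cdf G t \<le> HH G t" using wHE_rat[OF D HE] .
  have d0: "0 \<le> d" using Ht HH_nonneg[OF D, of \<tau>] c0 by (simp add: zero_le_mult_iff)
  have dlo: "d \<le> \<tau> - lo" using Ht HH_lo[OF D, of \<tau>] c0 by simp
  have c1: "cdf G \<tau> \<le> 1" by (rule cdf_bounded_prob)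
  have tm: "\<tau> \<le> \<mu> + d"
  proof (cases "\<tau> \<le> \<mu>")
    case True then show ?thesis using d0 by simp
  next
    case False
    have "(\<tau> - \<mu>) * cdf G \<tau> \<le> \<tau> - \<mu>" using False c1 by (simp add: mult_left_le)
    also have "\<dots> \<le> HH G \<tau>" using HH_ge[OF D, of \<tau>] mu by simp
    finally have "(\<tau> - \<mu>) * cdf G \<tau> \<le> d * cdf G \<tau>" using Ht by simp
    then show ?thesis using c0 by simp
  qed
  define m where "m = \<mu> + d"
  have phi: "\<phi>t \<le> HH G m - d"
    using P HH_wP[OF D, of m] mu unfolding wP_def m_def by simp
  define z where "z = HH G m - HH G \<tau>"
  have objz: "obj \<le> z" using phi Ht by (simp add: obj_def z_def algebra_simps)
  have Hhi: "HH G hi = DD" using HH_hi[OF D, of hi] mu by (simp add: DD_def)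
  have main: "z < T \<or> (d = DD \<and> z \<le> T \<and> (z = T \<longrightarrow> \<tau> = lo + DD))"
  proof (cases "d = 0")
    case True
    then have "z = HH G \<mu>" using Ht by (simp add: z_def m_def)
    also have "\<dots> \<le> (\<mu> - lo) / (hi - lo) * (hi - \<mu>)"
      using HH_chord[OF D, of \<mu>] lm mu by simp
    also have "\<dots> = DD * ((k/DD) / (1 + k/DD))"
    proof -
      have "(k/DD) / (1 + k/DD) = k / (DD + k)" using DD0 k0 by (simp add: field_simps)
      also have "DD + k = hi - lo" by (simp add: DD_def k_def)
      finally have e: "(k/DD) / (1 + k/DD) = k / (hi - lo)" .
      show ?thesis by (subst e) (simp add: DD_def k_def)
    qed
    also have "\<dots> < T" unfolding T_def using DD0 k0 d0_ineq[of "k/DD"] by (intro mult_strict_left_mono) auto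
    finally show ?thesis by simp
  next
    case dn0: False
    then have dpos: "0 < d" using d0 by simp
    show ?thesis
    proof (cases "d \<le> DD")
      case False
      have "\<not> \<tau> \<le> hi"
      proof
        assume "\<tau> \<le> hi"
        then have "d * cdf G hi \<le> HH G hi" by (rule rat)
        then show False using cdf_hi[OF D, of hi] Hhi False by simp
      qed
      then have "cdf G \<tau> = 1" "HH G \<tau> = \<tau> - \<mu>" using cdf_hi[OF D, of \<tau>] HH_hi[OF D, of \<tau>] mu by auto
      then have "\<tau> = m" using Ht by (simp add: m_def)
      then have "z = 0" by (simp add: z_def)
      then show ?thesis using T0 by simp
    next
      case dD: True
      have mhi: "m \<le> hi" using dD by (simp add: m_def DD_def)
      define L where "L = m - \<tau>"
      have L0: "0 \<le> L" using tm by (simp add: L_def m_def)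
      have Lk: "L \<le> k" using dlo by (simp add: L_def m_def k_def)
      show ?thesis
      proof (cases "L = 0")
        case True
        then have "z = 0" by (simp add: z_def L_def)
        then show ?thesis using T0 by simp
      next
        case False
        then have Lp: "0 < L" using L0 by simp
        define v where "v = 1 - exp (-(L/d))"
        have v0: "0 \<le> v" using Lp dpos by (simp add: v_def)
        have gr: "HH G m * exp (-((m - \<tau>) / d)) \<le> HH G \<tau>"
        proof (rule gronwall_disc[where C="cdf G"])
          show "\<tau> \<le> m" using L0 by (simp add: L_def)
        qed (use dpos HH_step[OF D] rat in auto)
        then have zv: "z \<le> v * HH G m" by (simp add: z_def v_def L_def algebra_simps)
        have s1: "z \<le> L * cdf G m" using HH_step[OF D, of \<tau> m] L0 by (simp add: z_def L_def)
        have s2: "(hi - m) * cdf G m \<le> HH G hi - HH G m" using HH_step_lo[OF D, of m hi] mhi by simp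
        have hm: "hi - m = DD - d" by (simp add: m_def DD_def)
        have "z * L \<le> v * HH G m * L" using zv Lp by (simp add: mult_right_mono)
        also have "\<dots> \<le> v * (DD - (DD - d) * cdf G m) * L"
          using s2 hm Hhi v0 Lp by (intro mult_right_mono mult_left_mono) auto
        also have "\<dots> = v * DD * L - v * (DD - d) * (L * cdf G m)" by (simp add: algebra_simps)
        also have "\<dots> \<le> v * DD * L - v * (DD - d) * z"
          using s1 v0 dD by (simp add: mult_left_mono)
        finally have zz: "z * (L + v * (DD - d)) \<le> v * DD * L" by (simp add: algebra_simps)
        have Tk: "DD * (1 - exp (-(L/DD))) \<le> T"
          using Lk DD0 by (simp add: T_def divide_right_mono)
        show ?thesis
        proof (cases "d = DD")
          case False
          then have dl: "d < DD" using dD by simp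
          have ki: "v * L < (1 - exp (-(L/DD))) * (L + v * (DD - d))"
            using key_ineq[OF Lp dpos dl] by (simp add: v_def)
          have pos: "0 < L + v * (DD - d)" using Lp v0 dl by (simp add: add_pos_nonneg)
          have "z * (L + v * (DD - d)) < DD * (1 - exp (-(L/DD))) * (L + v * (DD - d))"
            using zz ki DD0 by (smt (verit) mult.commute mult.left_commute mult_strict_left_mono)
          then have "z < DD * (1 - exp (-(L/DD)))" using pos by simp
          then show ?thesis using Tk by simp
        next
          case True
          then have zl: "z \<le> DD * v" using zz Lp by (simp add: algebra_simps)
          have "z \<le> T" using zl Tk True by (simp add: v_def)
          moreover have "z = T \<longrightarrow> \<tau> = lo + DD"
          proof
            assume zT: "z = T"
            have "L = k"
            proof (rule ccontr)
              assume "L \<noteq> k"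
              then have "L < k" using Lk by simp
              then have "exp (-(k/DD)) < exp (-(L/DD))" using DD0 by (simp add: divide_strict_right_mono)
              then have "DD * v < T" using True DD0 by (simp add: T_def v_def)
              then show False using zl zT by simp
            qed
            then show "\<tau> = lo + DD" using True by (simp add: L_def m_def k_def DD_def)
          qed
          ultimately show ?thesis using True by simp
        qed
      qed
    qed
  qed
  have A1: "obj \<le> T" using main objz by auto
  have A2: "\<phi>t = 0 \<and> d = DD \<and> \<tau> = lo + DD \<and> cdf G \<tau> = exp (-(k/DD))" if oT: "obj = T"
  proof -
    have zT: "z = T" and dD: "d = DD" and tt: "\<tau> = lo + DD" using main objz oT by auto
    have mh: "m = hi" using dD by (simp add: m_def DD_def)
    have "obj = \<phi>t + z" using Ht dD mh Hhi by (simp add: obj_def z_def algebra_simps)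
    then have p0: "\<phi>t = 0" using zT oT by simp
    have "DD * cdf G \<tau> = DD - T" using zT Ht dD mh Hhi by (simp add: z_def)
    also have "\<dots> = DD * exp (-(k/DD))" by (simp add: T_def algebra_simps)
    finally have "cdf G \<tau> = exp (-(k/DD))" using DD0 by simp
    then show ?thesis using p0 dD tt by simp
  qed
  have e1: "exp ((lo - \<mu>) / (hi - \<mu>)) = exp (-(k/DD))" by (simp only: ex)
  have e2: "hi - \<mu> = DD" by (simp add: DD_def)
  have e3: "(hi - \<mu>) * (1 - exp ((lo - \<mu>) / (hi - \<mu>))) = T" by (subst e1) (simp add: T_def DD_def)
  have e4: "exp ((lo - \<mu>) / DD) = exp (-(k/DD))" using e1 e2 by simp
  have e5: "DD * (1 - exp ((lo - \<mu>) / DD)) = T" using e3 e2 by simp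
  show ?thesis unfolding e2 e4 using A1 A2 unfolding obj_def T_def by blast
qed



lemma RE_shape:
  fixes G :: "real measure"
  assumes D: "dist_on G lo hi" and mu: "integral\<^sup>L G (\<lambda>s. s) = \<mu>" and lm: "lo < \<mu>" "\<mu> < hi"
    and HE: "wHE G (hi - \<mu>) \<tau>" and tt: "\<tau> = lo + (hi - \<mu>)"
    and ct: "cdf G \<tau> = exp ((lo - \<mu>) / (hi - \<mu>))"
  shows "\<forall>s\<in>{lo..hi}. cdf G s = G_star lo hi \<mu> s"
proof -
  interpret real_distribution G by (rule rd[OF D])
  define DD where "DD = hi - \<mu>"
  have DD0: "0 < DD" using lm by (simp add: DD_def)
  have th: "\<tau> \<le> hi" "lo < \<tau>" using tt lm by auto
  have ct': "cdf G \<tau> = exp ((\<tau> - hi) / DD)" using ct tt by (simp add: DD_def)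
  have Ht: "HH G \<tau> = DD * cdf G \<tau>" using wHE_eq[OF D HE] by (simp add: DD_def)
  have rat: "\<And>t. \<tau> \<le> t \<Longrightarrow> DD * cdf G t \<le> HH G t" using wHE_rat[OF D HE] by (simp add: DD_def)
  have Hhi: "HH G hi = DD" using HH_hi[OF D, of hi] mu by (simp add: DD_def)
  have up: "HH G s \<le> DD * exp ((s - hi) / DD)" if s: "\<tau> \<le> s" "s \<le> hi" for s
  proof -
    have "HH G s * exp (-((s - \<tau>) / DD)) \<le> HH G \<tau>"
      by (rule gronwall_disc[where C="cdf G"]) (use DD0 s HH_step[OF D] rat in auto)
    then have "HH G s \<le> HH G \<tau> * exp ((s - \<tau>) / DD)"
      by (simp add: exp_minus field_simps)
    also have "\<dots> = DD * exp ((\<tau> - hi) / DD + (s - \<tau>) / DD)" using Ht ct' by (simp add: exp_add)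
    also have "(\<tau> - hi) / DD + (s - \<tau>) / DD = (s - hi) / DD" by (simp add: add_divide_distrib[symmetric])
    finally show ?thesis .
  qed
  have lowH: "DD * exp ((s - hi) / DD) \<le> HH G s" if s: "\<tau> \<le> s" "s \<le> hi" for s
  proof -
    have "HH G hi * exp (-((hi - s) / DD)) \<le> HH G s"
      by (rule gronwall_disc[where C="cdf G"]) (use DD0 s HH_step[OF D] rat in auto)
    moreover have "-((hi - s) / DD) = (s - hi) / DD" by (simp add: minus_divide_left)
    ultimately show ?thesis using Hhi by simp
  qed
  have cup: "cdf G s \<le> exp ((s - hi) / DD)" if s: "\<tau> \<le> s" "s \<le> hi" for s
  proof -
    have "DD * cdf G s \<le> DD * exp ((s - hi) / DD)" using rat[OF s(1)] up[OF s] by linarith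
    then show ?thesis using DD0 by simp
  qed
  have clow: "exp ((r - hi) / DD) \<le> cdf G s" if s: "\<tau> \<le> r" "r < s" "s \<le> hi" for r s
  proof -
    have "exp ((s - hi) / DD) = exp ((r - hi) / DD) * exp ((s - r) / DD)"
      by (simp add: add_divide_distrib[symmetric] flip: exp_add)
    also have "\<dots> \<ge> exp ((r - hi) / DD) * (1 + (s - r) / DD)"
      by (intro mult_left_mono) auto
    finally have e: "exp ((r - hi) / DD) * (1 + (s - r) / DD) \<le> exp ((s - hi) / DD)" .
    have "(s - r) * exp ((r - hi) / DD) = DD * (exp ((r - hi) / DD) * (1 + (s - r) / DD)) - DD * exp ((r - hi) / DD)"
      using DD0 by (simp add: field_simps)
    also have "\<dots> \<le> DD * exp ((s - hi) / DD) - HH G r"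
      using e up[of r] s DD0 by (smt (verit) mult_left_mono)
    also have "\<dots> \<le> HH G s - HH G r" using lowH[of s] s by simp
    also have "\<dots> \<le> (s - r) * cdf G s" using HH_step[OF D, of r s] s by simp
    finally show ?thesis using s by simp
  qed
  have right: "cdf G s = exp ((s - hi) / DD)" if s: "\<tau> \<le> s" "s \<le> hi" for s
  proof (cases "s = \<tau>")
    case True then show ?thesis using ct' by simp
  next
    case False
    then have ts: "\<tau> < s" using s by simp
    have "exp ((s - hi) / DD) \<le> cdf G s"
    proof (rule tendsto_le[of "at_left s"])
      show "((\<lambda>r. exp ((r - hi) / DD)) \<longlongrightarrow> exp ((s - hi) / DD)) (at_left s)"
        using DD0 by (intro tendsto_intros) auto
      show "((\<lambda>r. cdf G s) \<longlongrightarrow> cdf G s) (at_left s)" by simp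
      show "\<forall>\<^sub>F r in at_left s. exp ((r - hi) / DD) \<le> cdf G s"
        using eventually_at_left_real[OF ts] by eventually_elim (use s clow in auto)
    qed simp
    then show ?thesis using cup[OF s] by simp
  qed
  have mid: "cdf G s = cdf G \<tau>" if s: "lo < s" "s < \<tau>" for s
  proof -
    have "HH G \<tau> \<le> (\<tau> - lo) * cdf G \<tau> - (s - lo) * cdf G \<tau> + (s - lo) * cdf G s"
      using HH_split[OF D s] .
    moreover have "HH G \<tau> = (\<tau> - lo) * cdf G \<tau>" using Ht tt by (simp add: DD_def)
    ultimately have "(s - lo) * cdf G \<tau> \<le> (s - lo) * cdf G s" by simp
    then have "cdf G \<tau> \<le> cdf G s" using s by simp
    moreover have "cdf G s \<le> cdf G \<tau>" using s by (intro cdf_nondecreasing) simp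
    ultimately show ?thesis by simp
  qed
  have atlo: "cdf G lo = cdf G \<tau>"
  proof -
    have "(cdf G \<longlongrightarrow> cdf G lo) (at_right lo)"
      using cdf_is_right_cont[of lo] by (simp add: continuous_within)
    moreover have ev: "\<forall>\<^sub>F x in at_right lo. cdf G x = cdf G \<tau>"
      using eventually_at_right_real[OF th(2)] by eventually_elim (use mid in auto)
    ultimately have "((\<lambda>x. cdf G \<tau>) \<longlongrightarrow> cdf G lo) (at_right lo)"
      using tendsto_cong[OF ev] by simp
    then show ?thesis using tendsto_const tendsto_unique trivial_limit_at_right_real by metis
  qed
  show ?thesis
  proof
    fix s assume s: "s \<in> {lo..hi}"
    show "cdf G s = G_star lo hi \<mu> s"
    proof (cases "s < \<tau>")
      case True
      then have "cdf G s = cdf G \<tau>" using s mid atlo by (cases "s = lo") auto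
      then show ?thesis using True ct tt by (simp add: G_star_def)
    next
      case False
      then show ?thesis using right[of s] s tt by (auto simp: G_star_def DD_def)
    qed
  qed
qed



definition UU :: "real measure" where
  "UU = density lborel (\<lambda>x. ennreal (indicator {0..1} x))"

lemma UU_prob: "prob_space UU"
proof (rule prob_spaceI)
  have "emeasure UU (space UU) = emeasure UU UNIV" by (simp add: UU_def)
  also have "\<dots> = 1"
    unfolding UU_def by (subst emeasure_density) (auto simp: ennreal_indicator)
  finally show "emeasure UU (space UU) = 1" .
qed

lemma UU_integral:
  fixes f :: "real \<Rightarrow> real"
  assumes "f \<in> borel_measurable borel"
  shows "integral\<^sup>L UU f = integral\<^sup>L lborel (\<lambda>u. indicator {0..1} u * f u)"
  unfolding UU_def using assms by (subst integral_density) auto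

lemma distr_integral:
  fixes f Q :: "real \<Rightarrow> real"
  assumes "f \<in> borel_measurable borel" "Q \<in> borel_measurable borel"
  shows "integral\<^sup>L (distr UU borel Q) f = integral\<^sup>L lborel (\<lambda>u. indicator {0..1} u * f (Q u))"
proof -
  have "integral\<^sup>L (distr UU borel Q) f = integral\<^sup>L UU (\<lambda>u. f (Q u))"
    by (rule integral_distr) (use assms in \<open>auto simp: UU_def\<close>)
  also have "\<dots> = integral\<^sup>L lborel (\<lambda>u. indicator {0..1} u * f (Q u))"
    by (rule UU_integral) (use assms in measurable)
  finally show ?thesis .
qed

lemma Q_meas: "(\<lambda>u. if u < p then lo else hi + D * ln u :: real) \<in> borel_measurable borel"
  by measurable



lemma RE_exists:
  fixes lo hi \<mu> :: real
  assumes lm: "lo < \<mu>" "\<mu> < hi"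
  shows "\<exists>G \<tau>. RE_feasible lo hi \<mu> G 0 (hi - \<mu>) \<tau>
            \<and> (\<forall>s\<in>{lo..hi}. cdf G s = G_star lo hi \<mu> s)
            \<and> RE_obj G 0 (hi - \<mu>) \<tau> = (hi - \<mu>) * (1 - exp ((lo - \<mu>) / (hi - \<mu>)))"
proof -
  define DD where "DD = hi - \<mu>"
  define p where "p = exp ((lo - \<mu>) / DD)"
  define \<tau> where "\<tau> = lo + DD"
  define cc where "cc t = exp ((t - hi) / DD)" for t
  have DD0: "0 < DD" using lm by (simp add: DD_def)
  have p0: "0 < p" by (simp add: p_def)
  have p1: "p < 1" using lm DD0 by (simp add: p_def DD_def divide_neg_pos)
  have lnp: "ln p = (\<tau> - hi) / DD" by (simp add: p_def \<tau>_def DD_def)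
  have ccp: "cc \<tau> = p" using lnp p0 by (simp add: cc_def flip: lnp)
  have cc_mono: "s \<le> t \<Longrightarrow> cc s \<le> cc t" for s t using DD0 by (simp add: cc_def divide_right_mono)
  have cc1: "cc hi = 1" by (simp add: cc_def)
  have ccpos: "0 < cc t" for t by (simp add: cc_def)
  have lt: "lo < \<tau>" using DD0 by (simp add: \<tau>_def)
  define Q where "Q u = (if u < p then lo else hi + DD * ln u)" for u
  have Qm: "Q \<in> borel_measurable borel" unfolding Q_def by (rule Q_meas)
  define G where "G = distr UU borel Q"
  have GI: "integral\<^sup>L G f = integral\<^sup>L lborel (\<lambda>u. indicator {0..1} u * f (Q u))"
    if "f \<in> borel_measurable borel" for f :: "real \<Rightarrow> real"
    unfolding G_def by (rule distr_integral[OF that Qm])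
  have Qa: "u < p \<Longrightarrow> Q u = lo" for u by (simp add: Q_def)
  have Qb: "p \<le> u \<Longrightarrow> u \<le> 1 \<Longrightarrow> \<tau> \<le> Q u \<and> Q u \<le> hi" for u
  proof -
    assume u: "p \<le> u" "u \<le> 1"
    have u0: "0 < u" using u p0 by simp
    have "ln p \<le> ln u" using u p0 by simp
    then have "\<tau> - hi \<le> DD * ln u" using lnp DD0 by (simp add: field_simps)
    moreover have "ln u \<le> 0" using u u0 by simp
    ultimately show ?thesis using u DD0 by (simp add: Q_def mult_nonneg_nonpos)
  qed
  have Qc: "p \<le> u \<Longrightarrow> (Q u \<le> t \<longleftrightarrow> u \<le> cc t)" for u t
  proof -
    assume u: "p \<le> u"
    have u0: "0 < u" using u p0 by simp
    have "Q u \<le> t \<longleftrightarrow> ln u \<le> (t - hi) / DD" using u p1 DD0 by (simp add: Q_def field_simps)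
    also have "\<dots> \<longleftrightarrow> u \<le> cc t" unfolding cc_def using u0 by (metis exp_le_cancel_iff exp_ln)
    finally show ?thesis .
  qed
  have iI: "integrable lborel (indicator {a..b} :: real \<Rightarrow> real)" for a b :: real
    by (rule integrable_real_indicator) (auto simp: emeasure_lborel_Icc_eq)
  have iIo: "integrable lborel (indicator {a..<b} :: real \<Rightarrow> real)" for a b :: real
  proof (rule integrable_real_indicator)
    have "emeasure lborel {a..<b} \<le> emeasure lborel {a..b}" by (rule emeasure_mono) auto
    then show "emeasure lborel {a..<b} < \<infinity>" by (simp add: emeasure_lborel_Icc_eq le_less_trans)
  qed auto
  have J0: "integral\<^sup>L lborel (indicator {0..<p} :: real \<Rightarrow> real) = p" using p0 by simp
  have J1: "integral\<^sup>L lborel (indicator {p..c} :: real \<Rightarrow> real) = c - p" if "p \<le> c" for c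
    using that by simp
  define Fn where "Fn u = hi * u + DD * (u * ln u - u)" for u
  have iL: "integrable lborel (\<lambda>u. indicator {p..c} u * (hi + DD * ln u))" for c
  proof -
    have "continuous_on {p..c} (\<lambda>u. hi + DD * ln u)" using p0
      by (intro continuous_intros) auto
    from borel_integrable_atLeastAtMost'[OF this] show ?thesis by (simp add: set_integrable_def)
  qed
  have J2: "integral\<^sup>L lborel (\<lambda>u. indicator {p..c} u * (hi + DD * ln u)) = Fn c - Fn p" if "p \<le> c" for c
  proof -
    have "integral\<^sup>L lborel (\<lambda>u. indicator {p..c} u *\<^sub>R (hi + DD * ln u)) = Fn c - Fn p"
    proof (rule integral_FTC_atLeastAtMost[OF that])
      fix x assume x: "p \<le> x" "x \<le> c"
      then have x0: "0 < x" using p0 by simp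
      have "(Fn has_real_derivative (hi + DD * ln x)) (at x)"
        unfolding Fn_def using x0 by (auto intro!: derivative_eq_intros simp: field_simps)
      then show "(Fn has_vector_derivative (hi + DD * ln x)) (at x within {p..c})"
        by (simp add: has_real_derivative_iff_has_vector_derivative has_vector_derivative_at_within)
    next
      show "continuous_on {p..c} (\<lambda>u. hi + DD * ln u)" using p0 by (intro continuous_intros) auto
    qed
    then show ?thesis by simp
  qed
  have Fnc: "Fn (cc t) - Fn p + p * lo = cc t * (t - DD)" for t
  proof -
    have "ln (cc t) = (t - hi) / DD" by (simp add: cc_def)
    then have h: "hi + DD * ln (cc t) = t" using DD0 by (simp add: field_simps)
    have "Fn (cc t) = cc t * (hi + DD * ln (cc t)) - DD * cc t" by (simp add: Fn_def algebra_simps)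
    then have a: "Fn (cc t) = cc t * (t - DD)" using h by (simp add: algebra_simps)
    have h2: "hi + DD * ln p = \<tau>" using lnp DD0 by (simp add: field_simps)
    have "Fn p = p * (hi + DD * ln p) - DD * p" by (simp add: Fn_def algebra_simps)
    then have "Fn p = p * (hi - (hi - \<tau>) - DD)" using h2 by (simp add: algebra_simps)
    then have "Fn p = p * lo" by (simp add: \<tau>_def)
    then show ?thesis using a by simp
  qed
  have cdfG: "cdf G t = integral\<^sup>L lborel (\<lambda>u. indicator {0..1} u * indicator {..t} (Q u))" for t
  proof -
    have "cdf G t = integral\<^sup>L G (indicator {..t})" by (simp add: cdf_def G_def)
    also have "\<dots> = integral\<^sup>L lborel (\<lambda>u. indicator {0..1} u * indicator {..t} (Q u))"
      by (rule GI) simp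
    finally show ?thesis .
  qed
  have PhiG: "(LINT s:{..t}|G. s) = integral\<^sup>L lborel (\<lambda>u. indicator {0..1} u * (indicator {..t} (Q u) * Q u))" for t
    unfolding set_lebesgue_integral_def by (subst GI) auto
  have P1: "indicator {0..1} u * indicator {..t} (Q u) = (indicator {0..<p} u + indicator {p..cc t} u :: real)"
    and P2: "indicator {0..1} u * (indicator {..t} (Q u) * Q u) = (indicator {0..<p} u * lo + indicator {p..cc t} u * (hi + DD * ln u) :: real)"
    if t: "\<tau> \<le> t" "t \<le> hi" for t u
  proof -
    have pc: "p \<le> cc t" using cc_mono[OF t(1)] ccp by simp
    have c1: "cc t \<le> 1" using cc_mono[OF t(2)] cc1 by simp
    have "indicator {0..1} u * indicator {..t} (Q u) = (indicator {0..<p} u + indicator {p..cc t} u :: real)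
       \<and> indicator {0..1} u * (indicator {..t} (Q u) * Q u) = (indicator {0..<p} u * lo + indicator {p..cc t} u * (hi + DD * ln u) :: real)"
    proof (cases "u < p")
      case True
      then show ?thesis using Qa[OF True] lt t p1 by (auto simp: indicator_def)
    next
      case False
      then have up: "p \<le> u" by simp
      show ?thesis using Qc[OF up, of t] up pc c1 p1 p0 by (auto simp: indicator_def Q_def)
    qed
    then show "indicator {0..1} u * indicator {..t} (Q u) = (indicator {0..<p} u + indicator {p..cc t} u :: real)"
      "indicator {0..1} u * (indicator {..t} (Q u) * Q u) = (indicator {0..<p} u * lo + indicator {p..cc t} u * (hi + DD * ln u) :: real)"
      by auto
  qed
  have R1: "cdf G t = cc t" if t: "\<tau> \<le> t" "t \<le> hi" for t
  proof -
    have pc: "p \<le> cc t" using cc_mono[OF t(1)] ccp by simp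
    have "cdf G t = integral\<^sup>L lborel (\<lambda>u. indicator {0..<p} u + indicator {p..cc t} u)"
      unfolding cdfG using P1[OF t] by simp
    also have "\<dots> = p + (cc t - p)"
      by (subst Bochner_Integration.integral_add) (use iI iIo J0 J1[OF pc] in auto)
    finally show ?thesis by simp
  qed
  have R2: "(LINT s:{..t}|G. s) = cc t * (t - DD)" if t: "\<tau> \<le> t" "t \<le> hi" for t
  proof -
    have pc: "p \<le> cc t" using cc_mono[OF t(1)] ccp by simp
    have "(LINT s:{..t}|G. s) = integral\<^sup>L lborel (\<lambda>u. indicator {0..<p} u * lo + indicator {p..cc t} u * (hi + DD * ln u))"
      unfolding PhiG using P2[OF t] by simp
    also have "\<dots> = p * lo + (Fn (cc t) - Fn p)"
      by (subst Bochner_Integration.integral_add) (use iIo iL J0 J2[OF pc] in auto)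
    finally show ?thesis using Fnc[of t] by simp
  qed
  have R3: "cdf G t = p" if t: "lo \<le> t" "t < \<tau>" for t
  proof -
    have "indicator {0..1} u * indicator {..t} (Q u) = (indicator {0..<p} u :: real)" for u
    proof (cases "u < p")
      case True then show ?thesis using Qa[OF True] t p1 by (auto simp: indicator_def)
    next
      case False
      then have "p \<le> u" by simp
      then show ?thesis using Qb[of u] t False by (auto simp: indicator_def)
    qed
    then show ?thesis unfolding cdfG using J0 by simp
  qed
  have onU: "u \<in> {0..1} \<Longrightarrow> lo \<le> Q u \<and> Q u \<le> hi" for u
  proof (cases "u < p")
    case True then show ?thesis using Qa lt lm by simp
  next
    case False
    assume "u \<in> {0..1}"
    then have "\<tau> \<le> Q u \<and> Q u \<le> hi" using Qb[of u] False by simp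
    then show ?thesis using lt by simp
  qed
  have R4: "cdf G t = 1 \<and> (LINT s:{..t}|G. s) = \<mu>" if t: "hi \<le> t" for t
  proof -
    have e1: "indicator {0..1} u * indicator {..t} (Q u) = (indicator {0..1} u * indicator {..hi} (Q u) :: real)" for u
      using onU[of u] t by (auto simp: indicator_def)
    have e2: "indicator {0..1} u * (indicator {..t} (Q u) * Q u) = (indicator {0..1} u * (indicator {..hi} (Q u) * Q u) :: real)" for u
      using onU[of u] t by (auto simp: indicator_def)
    have "cdf G t = cdf G hi" unfolding cdfG e1 ..
    moreover have "(LINT s:{..t}|G. s) = (LINT s:{..hi}|G. s)" unfolding PhiG e2 ..
    ultimately show ?thesis using R1[of hi] R2[of hi] lt lm cc1 by (simp add: \<tau>_def DD_def)
  qed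
  have R5: "measure G {lo..hi} = 1"
  proof -
    have "measure G {lo..hi} = integral\<^sup>L G (indicator {lo..hi})" by (simp add: G_def)
    also have "\<dots> = integral\<^sup>L lborel (\<lambda>u. indicator {0..1} u * indicator {lo..hi} (Q u))" by (rule GI) simp
    also have "\<dots> = integral\<^sup>L lborel (indicator {0..1} :: real \<Rightarrow> real)"
      by (rule Bochner_Integration.integral_cong) (use onU in \<open>auto simp: indicator_def\<close>)
    finally show ?thesis by simp
  qed
  have R6: "integral\<^sup>L G (\<lambda>s. s) = \<mu>"
  proof -
    have "integral\<^sup>L G (\<lambda>s. s) = integral\<^sup>L lborel (\<lambda>u. indicator {0..1} u * Q u)" by (rule GI) simp
    also have "\<dots> = integral\<^sup>L lborel (\<lambda>u. indicator {0..1} u * (indicator {..hi} (Q u) * Q u))"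
      by (rule Bochner_Integration.integral_cong) (use onU in \<open>auto simp: indicator_def\<close>)
    also have "\<dots> = \<mu>" using R4[of hi] PhiG[of hi] by simp
    finally show ?thesis .
  qed
  have probG: "prob_space G" unfolding G_def
    by (rule prob_space.prob_space_distr[OF UU_prob]) (use Qm in \<open>simp add: UU_def\<close>)
  have distG: "dist_on G lo hi" unfolding dist_on_def using probG R5 by (simp add: G_def)
  have HE: "wHE G DD \<tau>"
    unfolding wHE_def
  proof (intro conjI allI impI)
    show c: "0 < cdf G \<tau>" using R1[of \<tau>] lt lm ccp p0 by (simp add: \<tau>_def DD_def)
    show "\<tau> - DD = cond_mean_le G \<tau>"
      unfolding cond_mean_le_def using R1[of \<tau>] R2[of \<tau>] lt lm ccpos[of \<tau>] by (simp add: \<tau>_def DD_def)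
    fix t assume tt: "\<tau> < t"
    show "cond_mean_le G t \<le> t - DD"
    proof (cases "t \<le> hi")
      case True
      then show ?thesis unfolding cond_mean_le_def using R1[of t] R2[of t] tt ccpos[of t] by simp
    next
      case False
      then show ?thesis unfolding cond_mean_le_def using R4[of t] by (simp add: DD_def)
    qed
  qed
  have WP: "wP hi \<mu> G 0 DD"
  proof -
    have "(LINT s:{\<mu> + DD..hi}|G. s - (\<mu> + DD)) = integral\<^sup>L G (\<lambda>s. 0)"
      unfolding set_lebesgue_integral_def
      by (rule Bochner_Integration.integral_cong) (auto simp: DD_def indicator_def)
    then show ?thesis unfolding wP_def by simp
  qed
  have shape: "\<forall>s\<in>{lo..hi}. cdf G s = G_star lo hi \<mu> s"
  proof
    fix s assume s: "s \<in> {lo..hi}"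
    show "cdf G s = G_star lo hi \<mu> s"
    proof (cases "s < \<tau>")
      case True
      then show ?thesis using R3[of s] s by (simp add: G_star_def \<tau>_def DD_def p_def)
    next
      case False
      then show ?thesis using R1[of s] s by (simp add: G_star_def \<tau>_def DD_def cc_def)
    qed
  qed
  have obj: "RE_obj G 0 DD \<tau> = DD * (1 - exp ((lo - \<mu>) / DD))"
    unfolding RE_obj_def using R1[of \<tau>] lt lm ccp by (simp add: \<tau>_def DD_def p_def)
  show ?thesis
    using distG WP HE R6 shape obj unfolding RE_feasible_def DD_def by blast
qed



lemma mu_bounds:
  fixes F :: "real measure"
  assumes SB: "support_bounds F lo hi" and lh: "lo < hi"
  shows "lo < integral\<^sup>L F (\<lambda>x. x) \<and> integral\<^sup>L F (\<lambda>x. x) < hi"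
proof -
  have D: "dist_on F lo hi" using SB unfolding support_bounds_def by simp
  interpret real_distribution F by (rule rd[OF D])
  define c where "c = (lo + hi) / 2"
  have e0: "0 < (hi - lo) / 2" using lh by simp
  have m1: "measure F {c<..} > 0"
    using SB e0 unfolding support_bounds_def c_def by (auto simp: field_simps dest!: spec[of _ "(hi - lo)/2"])
  have m2: "measure F {..<c} > 0"
    using SB e0 unfolding support_bounds_def c_def by (auto simp: field_simps dest!: spec[of _ "(hi - lo)/2"])
  have "(c - lo) * measure F {c<..} = integral\<^sup>L F (\<lambda>x. (c - lo) * indicator {c<..} x)"
    by simp
  also have "\<dots> \<le> integral\<^sup>L F (\<lambda>x. x - lo)"
  proof (rule integral_mono_AE)
    show "integrable F (\<lambda>x. (c - lo) * indicator {c<..} x)"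
      by (intro integrable_mult_right intg_ind1[OF D]) auto
    show "integrable F (\<lambda>x. x - lo)"
      by (intro Bochner_Integration.integrable_diff intg_id[OF D]) auto
    show "AE x in F. (c - lo) * indicator {c<..} x \<le> x - lo"
      using AEin[OF D] by eventually_elim (auto simp: indicator_def)
  qed
  also have "\<dots> = integral\<^sup>L F (\<lambda>x. x) - lo"
    using intg_id[OF D] by (simp add: Bochner_Integration.integral_diff prob_space[simplified])
  finally have a: "(c - lo) * measure F {c<..} \<le> integral\<^sup>L F (\<lambda>x. x) - lo" .
  have "(hi - c) * measure F {..<c} = integral\<^sup>L F (\<lambda>x. (hi - c) * indicator {..<c} x)"
    by simp
  also have "\<dots> \<le> integral\<^sup>L F (\<lambda>x. hi - x)"
  proof (rule integral_mono_AE)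
    show "integrable F (\<lambda>x. (hi - c) * indicator {..<c} x)"
      by (intro integrable_mult_right intg_ind1[OF D]) auto
    show "integrable F (\<lambda>x. hi - x)"
      by (intro Bochner_Integration.integrable_diff intg_id[OF D]) auto
    show "AE x in F. (hi - c) * indicator {..<c} x \<le> hi - x"
      using AEin[OF D] by eventually_elim (auto simp: indicator_def)
  qed
  also have "\<dots> = hi - integral\<^sup>L F (\<lambda>x. x)"
    using intg_id[OF D] by (simp add: Bochner_Integration.integral_diff prob_space[simplified])
  finally have b: "(hi - c) * measure F {..<c} \<le> hi - integral\<^sup>L F (\<lambda>x. x)" .
  have "0 < (c - lo) * measure F {c<..}" using m1 lh by (simp add: c_def)
  moreover have "0 < (hi - c) * measure F {..<c}" using m2 lh by (simp add: c_def)
  ultimately show ?thesis using a b by linarith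
qed

theorem lemma9:
  fixes F :: "real measure" and lo hi \<mu> :: real
  assumes "0 \<le> lo" and "lo < hi"
    and "support_bounds F lo hi"
    and "\<mu> = (LINT x|F. x)"
  shows "(\<forall>G \<phi>t \<phi>d \<tau>. RE_feasible lo hi \<mu> G \<phi>t \<phi>d \<tau> \<longrightarrow>
            RE_obj G \<phi>t \<phi>d \<tau> \<le> (hi - \<mu>) * (1 - exp ((lo - \<mu>) / (hi - \<mu>))))
    \<and> (\<exists>G \<tau>. RE_feasible lo hi \<mu> G 0 (hi - \<mu>) \<tau>
            \<and> (\<forall>s\<in>{lo..hi}. cdf G s = G_star lo hi \<mu> s)
            \<and> RE_obj G 0 (hi - \<mu>) \<tau> = (hi - \<mu>) * (1 - exp ((lo - \<mu>) / (hi - \<mu>))))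
    \<and> (\<forall>G \<phi>t \<phi>d \<tau>. RE_feasible lo hi \<mu> G \<phi>t \<phi>d \<tau> \<and>
            RE_obj G \<phi>t \<phi>d \<tau> = (hi - \<mu>) * (1 - exp ((lo - \<mu>) / (hi - \<mu>))) \<longrightarrow>
            \<phi>t = 0 \<and> \<phi>d = hi - \<mu> \<and> (\<forall>s\<in>{lo..hi}. cdf G s = G_star lo hi \<mu> s))"
proof -
  have lm: "lo < \<mu>" "\<mu> < hi" using mu_bounds[OF assms(3,2)] assms(4) by auto
  have P1: "RE_obj G \<phi>t \<phi>d \<tau> \<le> (hi - \<mu>) * (1 - exp ((lo - \<mu>) / (hi - \<mu>)))"
    if "RE_feasible lo hi \<mu> G \<phi>t \<phi>d \<tau>" for G \<phi>t \<phi>d \<tau>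
    using RE_bound[of G lo hi \<mu> \<phi>t \<phi>d \<tau>] that lm unfolding RE_feasible_def RE_obj_def by auto
  have P3: "\<phi>t = 0 \<and> \<phi>d = hi - \<mu> \<and> (\<forall>s\<in>{lo..hi}. cdf G s = G_star lo hi \<mu> s)"
    if f: "RE_feasible lo hi \<mu> G \<phi>t \<phi>d \<tau>"
      and e: "RE_obj G \<phi>t \<phi>d \<tau> = (hi - \<mu>) * (1 - exp ((lo - \<mu>) / (hi - \<mu>)))" for G \<phi>t \<phi>d \<tau>
  proof -
    have D: "dist_on G lo hi" and wp: "wP hi \<mu> G \<phi>t \<phi>d" and he: "wHE G \<phi>d \<tau>"
      and mu: "integral\<^sup>L G (\<lambda>s. s) = \<mu>" using f unfolding RE_feasible_def by auto
    have r: "\<phi>t = 0 \<and> \<phi>d = hi - \<mu> \<and> \<tau> = lo + (hi - \<mu>) \<and> cdf G \<tau> = exp ((lo - \<mu>) / (hi - \<mu>))"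
      using RE_bound[OF D mu lm wp he] e unfolding RE_obj_def by auto
    then have "\<forall>s\<in>{lo..hi}. cdf G s = G_star lo hi \<mu> s"
      using RE_shape[OF D mu lm, of \<tau>] he by auto
    then show ?thesis using r by simp
  qed
  show ?thesis using P1 P3 RE_exists[OF lm] by blast
qed


end
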